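(* For each integer $r\ge 2$, the matrix $A'_r$ is $2$-modular.
   Context: An integer matrix $A$ is $\Delta$-modular if the determinant of every $\operatorname{rank}(A)\times\operatorname{rank}(A)$ submatrix has absolute value at most $\Delta$. $D_r$ denotes the $r\times\binom r2$ matrix whose columns are all vectors in $\mathbb{Z}^r$ with exactly two nonzero entries, the first (topmost) equal to $1$ and the second equal to $-1$. $A'_r$ is the $r\times(\binom{r+2}{2}-2)$ matrix $[\,I_r\mid D_r\mid B'_r\,]$, where $B'_r$ is the $r\times(r-1)$ matrix whose first two rows consist entirely of $1$'s, and whose last $r-2$ rows are $[\,-I_{r-2}\mid \mathbf 0\,]$ (i.e., in rows $3,\dots,r$ the first $r-2$ columns form $-I_{r-2}$ and the last column is zero). *)

theory Defs
  imports "Jordan_Normal_Form.DL_Rank_Submatrix"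
begin

definition int_mat_rank :: "int mat \<Rightarrow> nat" where
  "int_mat_rank A = vec_space.rank (dim_row A) (map_mat rat_of_int A)"

definition delta_modular :: "int \<Rightarrow> int mat \<Rightarrow> bool" where
  "delta_modular \<Delta> A \<longleftrightarrow>
     (\<forall>I J. I \<subseteq> {..<dim_row A} \<longrightarrow> J \<subseteq> {..<dim_col A} \<longrightarrow>
        card I = int_mat_rank A \<longrightarrow> card J = int_mat_rank A \<longrightarrow>
        \<bar>det (submatrix A I J)\<bar> \<le> \<Delta>)"

text \<open>Pairs (i,j), i<j<r, in lexicographic order; they index the columns of D_r
  (row indices are 0-based).\<close>
definition pairs_list :: "nat \<Rightarrow> (nat \<times> nat) list" where
  "pairs_list r = [(i, j). i \<leftarrow> [0..<r], j \<leftarrow> [Suc i..<r]]"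

definition D_mat :: "nat \<Rightarrow> int mat" where
  "D_mat r = mat r (r choose 2) (\<lambda>(k, c).
     (let p = pairs_list r ! c in
      if k = fst p then 1 else if k = snd p then -1 else 0))"

text \<open>B'_r: r x (r-1); first two rows all 1; rows 3..r are [-I_{r-2} | 0].\<close>
definition B'_mat :: "nat \<Rightarrow> int mat" where
  "B'_mat r = mat r (r - 1) (\<lambda>(k, c).
     if k < 2 then 1 else if c = k - 2 then -1 else 0)"

definition A'_mat :: "nat \<Rightarrow> int mat" where
  "A'_mat r = mat r (r + (r choose 2) + (r - 1)) (\<lambda>(k, c).
     if c < r then (if k = c then 1 else 0)
     else if c < r + (r choose 2) then D_mat r $$ (k, c - r)
     else B'_mat r $$ (k, c - r - (r choose 2)))"

end

theory Submission
  imports Defs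
begin

definition netv :: "nat \<Rightarrow> (nat \<Rightarrow> int) \<Rightarrow> bool" where
  "netv n v \<longleftrightarrow> (\<forall>i<n. v i \<in> {-1,0,1}) \<and>
     (\<forall>i<n. \<forall>i'<n. i \<noteq> i' \<longrightarrow> v i \<noteq> 0 \<longrightarrow> v i' \<noteq> 0 \<longrightarrow> v i + v i' = 0)"

lemma netv_sum_zero:
  assumes "netv n v" "i < n" "i' < n" "i \<noteq> i'" "v i \<noteq> 0" "v i' \<noteq> 0"
  shows "(\<Sum>k<n. v k) = 0"
proof -
  have z: "v k = 0" if "k < n" "k \<noteq> i" "k \<noteq> i'" for k
  proof (rule ccontr)
    assume "v k \<noteq> 0"
    then have "v i + v k = 0" "v i' + v k = 0" "v i + v i' = 0"
      using assms that unfolding netv_def by blast+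
    then show False using assms by simp
  qed
  have "(\<Sum>k<n. v k) = (\<Sum>k\<in>{i,i'}. v k)"
    by (rule sum.mono_neutral_right) (use assms z in auto)
  also have "\<dots> = 0" using assms unfolding netv_def by auto
  finally show ?thesis .
qed

lemma network_det:
  fixes A :: "int mat"
  assumes "A \<in> carrier_mat n n" "\<forall>j<n. netv n (\<lambda>i. A $$ (i,j))"
  shows "\<bar>det A\<bar> \<le> 1"
  using assms
proof (induction n arbitrary: A)
  case 0
  then show ?case by simp
next
  case (Suc m)
  note A = Suc.prems(1)
  show ?case
  proof (cases "\<exists>j<Suc m. \<forall>i<Suc m. \<forall>i'<Suc m. A $$ (i,j) \<noteq> 0 \<longrightarrow> A $$ (i',j) \<noteq> 0 \<longrightarrow> i = i'")
    case True
    then obtain j where j: "j < Suc m" and one: "\<forall>i<Suc m. \<forall>i'<Suc m. A $$ (i,j) \<noteq> 0 \<longrightarrow> A $$ (i',j) \<noteq> 0 \<longrightarrow> i = i'"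
      by blast
    have exp: "det A = (\<Sum>i<Suc m. A $$ (i,j) * cofactor A i j)"
      by (rule laplace_expansion_column[OF A j])
    have sub: "\<bar>cofactor A i j\<bar> \<le> 1" if i: "i < Suc m" for i
    proof -
      have D: "mat_delete A i j \<in> carrier_mat m m" using mat_delete_carrier[OF A] by simp
      have "\<forall>j'<m. netv m (\<lambda>i'. mat_delete A i j $$ (i',j'))"
      proof (intro allI impI)
        fix j' assume j': "j' < m"
        let ?f = "\<lambda>i'. if i' < i then i' else Suc i'"
        let ?c = "if j' < j then j' else Suc j'"
        have c: "?c < Suc m" using j' by auto
        have N: "netv (Suc m) (\<lambda>i. A $$ (i,?c))" using Suc.prems(2) c by blast
        have e: "mat_delete A i j $$ (i',j') = A $$ (?f i', ?c)" if "i' < m" for i'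
          unfolding mat_delete_def using A that j' by auto
        show "netv m (\<lambda>i'. mat_delete A i j $$ (i',j'))"
          unfolding netv_def
        proof (intro conjI allI impI)
          fix i' assume "i' < m"
          then have "?f i' < Suc m" by auto
          then have "A $$ (?f i', ?c) \<in> {- 1, 0, 1}" using N unfolding netv_def by blast
          then show "mat_delete A i j $$ (i', j') \<in> {- 1, 0, 1}"
            using e[OF \<open>i' < m\<close>] by simp
        next
          fix i1 i2 assume h: "i1 < m" "i2 < m" "i1 \<noteq> i2"
            "mat_delete A i j $$ (i1, j') \<noteq> 0" "mat_delete A i j $$ (i2, j') \<noteq> 0"
          have "?f i1 \<noteq> ?f i2" using h by auto
          moreover have "?f i1 < Suc m" "?f i2 < Suc m" using h by auto
          moreover have "A $$ (?f i1, ?c) \<noteq> 0" "A $$ (?f i2, ?c) \<noteq> 0"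
            using h e[OF h(1)] e[OF h(2)] by simp_all
          ultimately have "A $$ (?f i1, ?c) + A $$ (?f i2, ?c) = 0"
            using N unfolding netv_def by blast
          then show "mat_delete A i j $$ (i1, j') + mat_delete A i j $$ (i2, j') = 0"
            using e[OF h(1)] e[OF h(2)] by simp
        qed
      qed
      then have "\<bar>det (mat_delete A i j)\<bar> \<le> 1" using Suc.IH[OF D] by blast
      then show ?thesis unfolding cofactor_def by (simp add: abs_mult power_abs)
    qed
    show ?thesis
    proof (cases "\<exists>i<Suc m. A $$ (i,j) \<noteq> 0")
      case False
      then have "det A = 0" using exp by simp
      then show ?thesis by simp
    next
      case True
      then obtain i0 where i0: "i0 < Suc m" "A $$ (i0,j) \<noteq> 0" by blast
      have "det A = (\<Sum>i\<in>{i0}. A $$ (i,j) * cofactor A i j)"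
        unfolding exp by (rule sum.mono_neutral_right) (use i0 one in auto)
      then have "det A = A $$ (i0,j) * cofactor A i0 j" by simp
      moreover have "\<bar>A $$ (i0,j)\<bar> \<le> 1"
        using Suc.prems(2) j i0 unfolding netv_def by fastforce
      ultimately show ?thesis using sub[OF i0(1)]
        by (simp add: abs_mult mult_le_one)
    qed
  next
    case False
    have cs: "(\<Sum>i<Suc m. A $$ (i,j)) = 0" if j: "j < Suc m" for j
    proof -
      obtain i i' where "i < Suc m" "i' < Suc m" "A $$ (i,j) \<noteq> 0" "A $$ (i',j) \<noteq> 0" "i \<noteq> i'"
        using False j by blast
      then show ?thesis using netv_sum_zero[of "Suc m" "\<lambda>i. A $$ (i,j)"] Suc.prems(2) j by blast
    qed
    let ?v = "vec (Suc m) (\<lambda>_. 1::int)"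
    have AT: "A\<^sup>T \<in> carrier_mat (Suc m) (Suc m)" using A by simp
    have "A\<^sup>T *\<^sub>v ?v = 0\<^sub>v (Suc m)"
    proof (rule eq_vecI)
      fix j assume "j < dim_vec (0\<^sub>v (Suc m) :: int vec)"
      then have j: "j < Suc m" by simp
      have "(A\<^sup>T *\<^sub>v ?v) $ j = row A\<^sup>T j \<bullet> ?v" using AT j by simp
      also have "\<dots> = (\<Sum>i<Suc m. A $$ (i,j))"
        unfolding scalar_prod_def using A j by (simp add: lessThan_atLeast0)
      finally show "(A\<^sup>T *\<^sub>v ?v) $ j = 0\<^sub>v (Suc m) $ j" using cs[OF j] j by simp
    qed (use AT in simp)
    moreover have "?v \<noteq> 0\<^sub>v (Suc m)"
    proof
      assume "?v = 0\<^sub>v (Suc m)"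
      then have "?v $ 0 = 0\<^sub>v (Suc m) $ 0" by simp
      then show False by simp
    qed
    moreover have "?v \<in> carrier_vec (Suc m)" by simp
    ultimately have "det A\<^sup>T = 0"
      using det_0_iff_vec_prod_zero[OF AT] by blast
    then have "det A = 0" using det_transpose[OF A] by simp
    then show ?thesis by simp
  qed
qed

lemma det_col_split:
  fixes A :: "int mat"
  assumes A: "A \<in> carrier_mat n n" and j: "j < n" and uw: "\<forall>i<n. A $$ (i,j) = u i + w i"
  shows "det A = det (mat n n (\<lambda>(i,k). if k = j then u i else A $$ (i,k)))
               + det (mat n n (\<lambda>(i,k). if k = j then w i else A $$ (i,k)))"
proof -
  define Au where "Au = mat n n (\<lambda>(i,k). if k = j then u i else A $$ (i,k))"
  define Aw where "Aw = mat n n (\<lambda>(i,k). if k = j then w i else A $$ (i,k))"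
  have Au: "Au \<in> carrier_mat n n" and Aw: "Aw \<in> carrier_mat n n" unfolding Au_def Aw_def by auto
  have du: "mat_delete Au i j = mat_delete A i j" for i
    by (rule eq_matI) (use A in \<open>auto simp: mat_delete_def Au_def\<close>)
  have dw: "mat_delete Aw i j = mat_delete A i j" for i
    by (rule eq_matI) (use A in \<open>auto simp: mat_delete_def Aw_def\<close>)
  have "det Au + det Aw = (\<Sum>i<n. Au $$ (i,j) * cofactor Au i j) + (\<Sum>i<n. Aw $$ (i,j) * cofactor Aw i j)"
    using laplace_expansion_column[OF Au j] laplace_expansion_column[OF Aw j] by simp
  also have "\<dots> = (\<Sum>i<n. u i * cofactor A i j) + (\<Sum>i<n. w i * cofactor A i j)"
    using j unfolding cofactor_def du dw by (simp add: Au_def Aw_def)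
  also have "\<dots> = (\<Sum>i<n. A $$ (i,j) * cofactor A i j)"
    unfolding sum.distrib[symmetric] using uw by (intro sum.cong) (auto simp: distrib_right)
  also have "\<dots> = det A" using laplace_expansion_column[OF A j] by simp
  finally show ?thesis unfolding Au_def Aw_def by simp
qed

lemma det_colsub:
  fixes A :: "int mat"
  assumes A: "A \<in> carrier_mat n n" and p: "p < n" and T: "finite T" "T \<subseteq> {..<n}" "p \<notin> T"
  shows "det (mat n n (\<lambda>(i,k). if k \<in> T then A $$ (i,k) - A $$ (i,p) else A $$ (i,k))) = det A"
  using T
proof (induction T rule: finite_induct)
  case empty
  have "mat n n (\<lambda>(i,k). if k \<in> {} then A $$ (i,k) - A $$ (i,p) else A $$ (i,k)) = A"
    by (rule eq_matI) (use A in auto)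
  then show ?case by simp
next
  case (insert t T)
  let ?M = "mat n n (\<lambda>(i,k). if k \<in> T then A $$ (i,k) - A $$ (i,p) else A $$ (i,k))"
  have M: "?M \<in> carrier_mat n n" by simp
  have tp: "t \<noteq> p" using insert by auto
  have "mat n n (\<lambda>(i,k). if k \<in> insert t T then A $$ (i,k) - A $$ (i,p) else A $$ (i,k))
        = addcol (-1) t p ?M"
    by (rule eq_matI) (use insert p in \<open>auto simp: mat_addcol_def\<close>)
  also have "det \<dots> = det ?M" by (rule det_addcol[OF p tp M])
  also have "\<dots> = det A" using insert by simp
  finally show ?case .
qed

lemma abstract_bound:
  fixes M :: "int mat"
  assumes M: "M \<in> carrier_mat n n"
    and net: "\<forall>j<n. j \<notin> Sp \<longrightarrow> netv n (\<lambda>i. M $$ (i,j))"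
    and diff: "\<forall>j<n. \<forall>j'<n. j \<in> Sp \<longrightarrow> j' \<in> Sp \<longrightarrow> netv n (\<lambda>i. M $$ (i,j) - M $$ (i,j'))"
    and spl: "\<forall>j<n. j \<in> Sp \<longrightarrow> (\<exists>u w. netv n u \<and> netv n w \<and> (\<forall>i<n. M $$ (i,j) = u i + w i))"
  shows "\<bar>det M\<bar> \<le> 2"
proof (cases "\<exists>p<n. p \<in> Sp")
  case False
  then have "\<bar>det M\<bar> \<le> 1" using network_det[OF M] net by blast
  then show ?thesis by simp
next
  case True
  then obtain p where p: "p < n" "p \<in> Sp" by blast
  define T where "T = {k. k < n \<and> k \<in> Sp \<and> k \<noteq> p}"
  define M' where "M' = mat n n (\<lambda>(i,k). if k \<in> T then M $$ (i,k) - M $$ (i,p) else M $$ (i,k))"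
  have M': "M' \<in> carrier_mat n n" unfolding M'_def by simp
  have dM: "det M' = det M" unfolding M'_def
    by (rule det_colsub[OF M p(1)]) (auto simp: T_def)
  obtain u w where uw: "netv n u" "netv n w" "\<forall>i<n. M $$ (i,p) = u i + w i"
    using spl p by blast
  have split: "\<forall>i<n. M' $$ (i,p) = u i + w i" using uw(3) p by (simp add: M'_def T_def)
  have other: "netv n (\<lambda>i. M' $$ (i,k))" if "k < n" "k \<noteq> p" for k
  proof (cases "k \<in> Sp")
    case True
    have "netv n (\<lambda>i. M $$ (i,k) - M $$ (i,p))" using diff that True p by blast
    moreover have "(\<lambda>i. M' $$ (i,k)) = (\<lambda>i. M $$ (i,k) - M $$ (i,p)) \<or> True" by simp
    moreover have "\<forall>i<n. M' $$ (i,k) = M $$ (i,k) - M $$ (i,p)"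
      using that True by (simp add: M'_def T_def)
    ultimately show ?thesis unfolding netv_def by simp
  next
    case False
    have "netv n (\<lambda>i. M $$ (i,k))" using net that False by blast
    moreover have "\<forall>i<n. M' $$ (i,k) = M $$ (i,k)"
      using that False by (simp add: M'_def T_def)
    ultimately show ?thesis unfolding netv_def by simp
  qed
  define Mu where "Mu = mat n n (\<lambda>(i,k). if k = p then u i else M' $$ (i,k))"
  define Mw where "Mw = mat n n (\<lambda>(i,k). if k = p then w i else M' $$ (i,k))"
  have "det M' = det Mu + det Mw" unfolding Mu_def Mw_def
    by (rule det_col_split[OF M' p(1) split])
  moreover have "\<bar>det Mu\<bar> \<le> 1"
  proof (rule network_det)
    show "Mu \<in> carrier_mat n n" unfolding Mu_def by simp
    show "\<forall>j<n. netv n (\<lambda>i. Mu $$ (i, j))"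
    proof (intro allI impI)
      fix j assume j: "j < n"
      show "netv n (\<lambda>i. Mu $$ (i, j))"
      proof (cases "j = p")
        case True
        then show ?thesis using uw(1) j unfolding netv_def Mu_def by simp
      next
        case False
        then show ?thesis using other[OF j False] j unfolding netv_def Mu_def by simp
      qed
    qed
  qed
  moreover have "\<bar>det Mw\<bar> \<le> 1"
  proof (rule network_det)
    show "Mw \<in> carrier_mat n n" unfolding Mw_def by simp
    show "\<forall>j<n. netv n (\<lambda>i. Mw $$ (i, j))"
    proof (intro allI impI)
      fix j assume j: "j < n"
      show "netv n (\<lambda>i. Mw $$ (i, j))"
      proof (cases "j = p")
        case True
        then show ?thesis using uw(2) j unfolding netv_def Mw_def by simp
      next
        case False
        then show ?thesis using other[OF j False] j unfolding netv_def Mw_def by simp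
      qed
    qed
  qed
  ultimately show ?thesis using dM by simp
qed

lemma netv_cong: "(\<And>i. i < m \<Longrightarrow> v i = v' i) \<Longrightarrow> netv m v = netv m v'"
  unfolding netv_def by auto

lemma netv_comp:
  assumes "netv m g" "\<forall>i<n. f i < m" "\<forall>i<n. \<forall>i'<n. i \<noteq> i' \<longrightarrow> f i \<noteq> f i'"
  shows "netv n (\<lambda>i. g (f i))"
  using assms unfolding netv_def by blast

lemma netv_ab: "netv m (\<lambda>k. if k = a then 1 else if k = b then -1 else 0)"
  unfolding netv_def by auto

definition Bf :: "nat \<Rightarrow> nat \<Rightarrow> int" where
  "Bf c k = (if k < 2 then 1 else if k = c + 2 then -1 else 0)"

lemma netv_Bdiff: "netv m (\<lambda>k. Bf c k - Bf d k)"
proof (cases "c = d")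
  case True
  then show ?thesis unfolding netv_def by simp
next
  case False
  have "netv m (\<lambda>k. if k = d + 2 then 1 else if k = c + 2 then -1 else 0)" by (rule netv_ab)
  moreover have "Bf c k - Bf d k = (if k = d + 2 then 1 else if k = c + 2 then -1 else 0)" for k
    using False unfolding Bf_def by auto
  ultimately show ?thesis by simp
qed

lemma A'_entry:
  assumes "k < r" "c < r + (r choose 2) + (r - 1)"
  shows "A'_mat r $$ (k,c) =
    (if c < r then (if k = c then 1 else 0)
     else if c < r + (r choose 2) then
       (if k = fst (pairs_list r ! (c - r)) then 1 else if k = snd (pairs_list r ! (c - r)) then -1 else 0)
     else Bf (c - r - (r choose 2)) k)"
  using assms unfolding A'_mat_def D_mat_def B'_mat_def Bf_def by (auto simp: Let_def)

theorem lemma3p2: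
  fixes r :: nat
  assumes "r \<ge> 2"
  shows "delta_modular 2 (A'_mat r)"
  unfolding delta_modular_def
proof (intro allI impI)
  fix I J
  assume I: "I \<subseteq> {..<dim_row (A'_mat r)}" and J: "J \<subseteq> {..<dim_col (A'_mat r)}"
    and cI: "card I = int_mat_rank (A'_mat r)" and cJ: "card J = int_mat_rank (A'_mat r)"
  define C where "C = r choose 2"
  define N where "N = r + C + (r - 1)"
  define n where "n = card I"
  have dims: "dim_row (A'_mat r) = r" "dim_col (A'_mat r) = N"
    unfolding A'_mat_def N_def C_def by auto
  have I': "I \<subseteq> {..<r}" and J': "J \<subseteq> {..<N}" using I J dims by auto
  have fI: "finite I" and fJ: "finite J" using I' J' finite_subset by auto
  have nJ: "card J = n" using cI cJ n_def by simp
  have e1: "{i. i < dim_row (A'_mat r) \<and> i \<in> I} = I" using I by auto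
  have e2: "{j. j < dim_col (A'_mat r) \<and> j \<in> J} = J" using J by auto
  let ?S = "submatrix (A'_mat r) I J"
  have S: "?S \<in> carrier_mat n n"
    using dim_submatrix[of "A'_mat r" I J] e1 e2 nJ unfolding carrier_mat_def n_def by simp
  have Sidx: "?S $$ (i,j) = A'_mat r $$ (pick I i, pick J j)" if "i < n" "j < n" for i j
    using submatrix_index[of i "A'_mat r" I j J] that unfolding e1 e2 n_def nJ by simp
  have pI: "pick I i < r" if "i < n" for i
    using pick_in_set[of i I] that I' unfolding n_def by auto
  have pJ: "pick J j < N" if "j < n" for j
    using pick_in_set[of j J] that J' nJ by auto
  have injI: "\<forall>i<n. \<forall>i'<n. i \<noteq> i' \<longrightarrow> pick I i \<noteq> pick I i'"
  proof (intro allI impI)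
    fix i i' assume h: "i < n" "i' < n" "i \<noteq> i'"
    show "pick I i \<noteq> pick I i'"
    proof (cases "i < i'")
      case True
      then show ?thesis using pick_mono[of i' I i] h unfolding n_def by simp
    next
      case False
      then have "i' < i" using h by simp
      then show ?thesis using pick_mono[of i I i'] h unfolding n_def by simp
    qed
  qed
  have pIr: "\<forall>i<n. pick I i < r" using pI by blast
  define Sp where "Sp = {j. r + C \<le> pick J j}"
  have "\<bar>det ?S\<bar> \<le> 2"
  proof (rule abstract_bound[OF S, of Sp])
    show "\<forall>j<n. j \<notin> Sp \<longrightarrow> netv n (\<lambda>i. ?S $$ (i, j))"
    proof (intro allI impI)
      fix j assume j: "j < n" and nsp: "j \<notin> Sp"
      define c where "c = pick J j"
      have c: "c < N" "c < r + C" using pJ[OF j] nsp unfolding c_def Sp_def by auto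
      have "netv r (\<lambda>k. A'_mat r $$ (k, c))"
      proof (cases "c < r")
        case True
        have "netv r (\<lambda>k. if k = c then 1 else if k = c then -1 else 0)" by (rule netv_ab)
        then show ?thesis
          by (subst netv_cong[where v' = "\<lambda>k. if k = c then 1 else if k = c then -1 else 0"])
             (use c True in \<open>auto simp: A'_entry N_def\<close>)
      next
        case False
        have "netv r (\<lambda>k. if k = fst (pairs_list r ! (c - r)) then 1
                 else if k = snd (pairs_list r ! (c - r)) then -1 else 0)" by (rule netv_ab)
        then show ?thesis
          by (subst netv_cong[where v' = "\<lambda>k. if k = fst (pairs_list r ! (c - r)) then 1
                 else if k = snd (pairs_list r ! (c - r)) then -1 else 0"])
             (use c False in \<open>auto simp: A'_entry N_def C_def\<close>)
      qed
      then have "netv n (\<lambda>i. A'_mat r $$ (pick I i, c))"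
        by (rule netv_comp[OF _ pIr injI])
      then show "netv n (\<lambda>i. ?S $$ (i, j))"
        by (subst netv_cong[where v' = "\<lambda>i. A'_mat r $$ (pick I i, c)"])
           (use j in \<open>auto simp: Sidx c_def\<close>)
    qed
  next
    show "\<forall>j<n. \<forall>j'<n. j \<in> Sp \<longrightarrow> j' \<in> Sp \<longrightarrow> netv n (\<lambda>i. ?S $$ (i, j) - ?S $$ (i, j'))"
    proof (intro allI impI)
      fix j j' assume j: "j < n" "j' < n" "j \<in> Sp" "j' \<in> Sp"
      define c where "c = pick J j"
      define d where "d = pick J j'"
      have c: "c < N" "r + C \<le> c" "d < N" "r + C \<le> d"
        using pJ[OF j(1)] pJ[OF j(2)] j unfolding c_def d_def Sp_def by auto
      have "netv n (\<lambda>i. Bf (c - r - C) (pick I i) - Bf (d - r - C) (pick I i))"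
        by (rule netv_comp[OF netv_Bdiff pIr injI])
      then show "netv n (\<lambda>i. ?S $$ (i, j) - ?S $$ (i, j'))"
        by (subst netv_cong[where v' = "\<lambda>i. Bf (c - r - C) (pick I i) - Bf (d - r - C) (pick I i)"])
           (use j c pI in \<open>auto simp: Sidx c_def d_def A'_entry N_def C_def\<close>)
    qed
  next
    show "\<forall>j<n. j \<in> Sp \<longrightarrow> (\<exists>u w. netv n u \<and> netv n w \<and> (\<forall>i<n. ?S $$ (i, j) = u i + w i))"
    proof (intro allI impI)
      fix j assume j: "j < n" "j \<in> Sp"
      define c where "c = pick J j"
      have c: "c < N" "r + C \<le> c" using pJ[OF j(1)] j unfolding c_def Sp_def by auto
      define u where "u = (\<lambda>i. (\<lambda>k. if k = 0 then 1 else if k = 0 then -1 else (0::int)) (pick I i))"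
      define w where "w = (\<lambda>i. (\<lambda>k. if k = 1 then 1 else if k = c - r - C + 2 then -1 else (0::int)) (pick I i))"
      have "netv n u" unfolding u_def by (rule netv_comp[OF netv_ab pIr injI])
      moreover have "netv n w" unfolding w_def by (rule netv_comp[OF netv_ab pIr injI])
      moreover have "\<forall>i<n. ?S $$ (i, j) = u i + w i"
        using j c pI by (auto simp: Sidx c_def A'_entry N_def C_def u_def w_def Bf_def)
      ultimately show "\<exists>u w. netv n u \<and> netv n w \<and> (\<forall>i<n. ?S $$ (i, j) = u i + w i)" by blast
    qed
  qed
  then show "\<bar>det ?S\<bar> \<le> 2" .
qed

end
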